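(* Let $A$ be a finite set, let $X \subset A^{\mathbb Z}$ be a subshift, and let $n_0 \geq 0$ be an integer. The following are equivalent: (a) for all $u,v \in L(X)$ there exists a word $c \in L(X)$ with $|c| \leq n_0$ such that $ucv \in L(X)$; (b) $X$ is irreducible and for every $u \in L(X)$ there exists a word $c \in L(X)$ with $|c| \leq n_0$ such that $ucu \in L(X)$.
   Context: A subshift of $A^{\mathbb Z}$ is a closed shift-invariant subset (product topology of discrete topologies). $A^*$ is the free monoid of finite words over $A$ (including the empty word), $|w|$ the length, and juxtaposition denotes concatenation. A word $w$ appears in $x\in A^{\mathbb Z}$ if $w$ is empty or $w=x(i)x(i+1)\cdots x(j)$ for some $i\le j$. The language $L(X)$ is the set of words appearing in some configuration of $X$. $X$ is irreducible if for all $u,v\in L(X)$ there is $w\in L(X)$ with $uwv\in L(X)$. *)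

theory Defs
  imports "HOL-Analysis.Analysis"
begin

definition full_shift_top :: "'a set \<Rightarrow> (int \<Rightarrow> 'a) topology" where
  "full_shift_top A = product_topology (\<lambda>_. discrete_topology A) UNIV"

definition shift :: "(int \<Rightarrow> 'a) \<Rightarrow> (int \<Rightarrow> 'a)" where
  "shift x = (\<lambda>i. x (i + 1))"

definition subshift :: "'a set \<Rightarrow> (int \<Rightarrow> 'a) set \<Rightarrow> bool" where
  "subshift A X \<longleftrightarrow> closedin (full_shift_top A) X \<and> shift ` X = X"

definition appears :: "'a list \<Rightarrow> (int \<Rightarrow> 'a) \<Rightarrow> bool" where
  "appears w x \<longleftrightarrow> w = [] \<or> (\<exists>i j. i \<le> j \<and> w = map x [i..j])"

definition lang :: "(int \<Rightarrow> 'a) set \<Rightarrow> 'a list set" where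
  "lang X = {w. \<exists>x\<in>X. appears w x}"

definition irreducible_shift :: "(int \<Rightarrow> 'a) set \<Rightarrow> bool" where
  "irreducible_shift X \<longleftrightarrow>
     (\<forall>u\<in>lang X. \<forall>v\<in>lang X. \<exists>w\<in>lang X. u @ w @ v \<in> lang X)"

end

theory Submission
  imports Defs
begin

lemma appears_alt:
  "appears w x \<longleftrightarrow> w = [] \<or> (\<exists>i. w = map (\<lambda>k. x (i + int k)) [0..<length w])"
proof
  assume "appears w x"
  then show "w = [] \<or> (\<exists>i. w = map (\<lambda>k. x (i + int k)) [0..<length w])"
    unfolding appears_def
  proof
    assume "\<exists>i j. i \<le> j \<and> w = map x [i..j]"
    then obtain i j where "i \<le> j" "w = map x [i..j]" by blast
    then have "w = map (\<lambda>k. x (i + int k)) [0..<length w]"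
      by (intro nth_equalityI) (auto simp: nth_upto)
    then show ?thesis by blast
  qed simp
next
  assume "w = [] \<or> (\<exists>i. w = map (\<lambda>k. x (i + int k)) [0..<length w])"
  then show "appears w x" unfolding appears_def
  proof
    assume "\<exists>i. w = map (\<lambda>k. x (i + int k)) [0..<length w]"
    then obtain i where w: "w = map (\<lambda>k. x (i + int k)) [0..<length w]" by blast
    show "w = [] \<or> (\<exists>i j. i \<le> j \<and> w = map x [i..j])"
    proof (cases "w = []")
      case False
      then have "length w > 0" by simp
      have "w = map x [i..i + int (length w) - 1]"
        apply (rule nth_equalityI)
        using \<open>length w > 0\<close> apply simp
        apply (subst w)
        using \<open>length w > 0\<close> by (simp add: nth_upto)
      then show ?thesis using \<open>length w > 0\<close> by (intro disjI2 exI[of _ i] exI[of _ "i + int (length w) - 1"]) auto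
    qed simp
  qed simp
qed

lemma appears_factor:
  assumes "appears (p @ s @ q) x" shows "appears s x"
proof -
  from assms[unfolded appears_alt] show ?thesis
  proof
    assume "p @ s @ q = []" then show ?thesis by (simp add: appears_def)
  next
    assume "\<exists>i. p @ s @ q = map (\<lambda>k. x (i + int k)) [0..<length (p @ s @ q)]"
    then obtain i where w: "p @ s @ q = map (\<lambda>k. x (i + int k)) [0..<length (p @ s @ q)]" by blast
    have "s = map (\<lambda>k. x ((i + int (length p)) + int k)) [0..<length s]"
    proof (rule nth_equalityI)
      fix k assume k: "k < length s"
      have "s ! k = (p @ s @ q) ! (length p + k)" using k by (simp add: nth_append)
      also have "\<dots> = x (i + int (length p + k))" using k by (subst w) simp
      finally show "s ! k = map (\<lambda>k. x ((i + int (length p)) + int k)) [0..<length s] ! k"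
        using k by (simp add: add.assoc)
    qed simp
    then show ?thesis unfolding appears_alt by blast
  qed
qed

lemma lang_factor: "p @ s @ q \<in> lang X \<Longrightarrow> s \<in> lang X"
  unfolding lang_def using appears_factor by blast

theorem proposition4p1:
  fixes A :: "'a set" and X :: "(int \<Rightarrow> 'a) set" and n0 :: nat
  assumes "finite A" and "subshift A X"
  shows "(\<forall>u\<in>lang X. \<forall>v\<in>lang X. \<exists>c\<in>lang X. length c \<le> n0 \<and> u @ c @ v \<in> lang X)
     \<longleftrightarrow> (irreducible_shift X \<and>
          (\<forall>u\<in>lang X. \<exists>c\<in>lang X. length c \<le> n0 \<and> u @ c @ u \<in> lang X))"
proof
  assume a: "\<forall>u\<in>lang X. \<forall>v\<in>lang X. \<exists>c\<in>lang X. length c \<le> n0 \<and> u @ c @ v \<in> lang X"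
  then show "irreducible_shift X \<and>
          (\<forall>u\<in>lang X. \<exists>c\<in>lang X. length c \<le> n0 \<and> u @ c @ u \<in> lang X)"
    unfolding irreducible_shift_def by blast
next
  assume b: "irreducible_shift X \<and>
          (\<forall>u\<in>lang X. \<exists>c\<in>lang X. length c \<le> n0 \<and> u @ c @ u \<in> lang X)"
  show "\<forall>u\<in>lang X. \<forall>v\<in>lang X. \<exists>c\<in>lang X. length c \<le> n0 \<and> u @ c @ v \<in> lang X"
  proof (intro ballI)
    fix u v assume u: "u \<in> lang X" and v: "v \<in> lang X"
    obtain w where "w \<in> lang X" and z: "v @ w @ u \<in> lang X"
      using b u v unfolding irreducible_shift_def by blast
    then obtain c where c: "c \<in> lang X" "length c \<le> n0"
      and zz: "(v @ w @ u) @ c @ (v @ w @ u) \<in> lang X" using b by blast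
    have "(v @ w) @ (u @ c @ v) @ (w @ u) \<in> lang X" using zz by simp
    then have "u @ c @ v \<in> lang X" by (rule lang_factor)
    then show "\<exists>c\<in>lang X. length c \<le> n0 \<and> u @ c @ v \<in> lang X" using c by blast
  qed
qed

end
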